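(* Let $\mathbf{L}\in\{\mathbf{K}_D,\mathbf{KD}_D,\mathbf{KT}_D\}$. For every formula $A$: $\mathsf{H}(\mathbf{L})\vdash A$ if and only if $\mathsf{G}(\mathbf{L})\vdash\;\Rightarrow A$.
   Context: Language: fix a finite nonempty set $\mathsf{Agt}$ of agents and a countable set $\mathsf{Prop}$ of propositional variables; $\mathsf{Grp}$ is the set of nonempty subsets of $\mathsf{Agt}$. Formulas: $\alpha::=p\mid\bot\mid\alpha\wedge\alpha\mid\alpha\vee\alpha\mid\alpha\rightarrow\alpha\mid\neg\alpha\mid D_G\alpha$ ($p\in\mathsf{Prop}$, $G\in\mathsf{Grp}$). Outmost-boxed formula: one of the form $D_G\gamma$. Hilbert systems: $\mathsf{H}(\mathbf{K}_D)$ has all instances of propositional tautologies, $D_G(\alpha\rightarrow\beta)\rightarrow(D_G\alpha\rightarrow D_G\beta)$, $D_G\alpha\rightarrow D_H\alpha$ for $G\subseteq H$, modus ponens, and necessitation (from $\alpha$ infer $D_G\alpha$). $\mathsf{H}(\mathbf{KD}_D)$ adds $\neg D_{\{a\}}\bot$ for each $a\in\mathsf{Agt}$; $\mathsf{H}(\mathbf{KT}_D)$ adds $D_G\alpha\rightarrow\alpha$. Sequent calculi (sequents $\Gamma\Rightarrow\Delta$ are pairs of finite multisets; derivable = root of a finite tree built from initial sequents by rules): $\mathsf{G}(\mathbf{K}_D)$ has initial sequents $\Gamma,p\Rightarrow p,\Delta$ and $\bot,\Gamma\Rightarrow\Delta$; rules $(R\wedge)$ from $\Gamma\Rightarrow\Delta,\alpha_1$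 and $\Gamma\Rightarrow\Delta,\alpha_2$ infer $\Gamma\Rightarrow\Delta,\alpha_1\wedge\alpha_2$; $(L\wedge)$ from $\alpha_1,\alpha_2,\Gamma\Rightarrow\Delta$ infer $\alpha_1\wedge\alpha_2,\Gamma\Rightarrow\Delta$; $(R\vee)$ from $\Gamma\Rightarrow\Delta,\alpha_1,\alpha_2$ infer $\Gamma\Rightarrow\Delta,\alpha_1\vee\alpha_2$; $(L\vee)$ from $\alpha_1,\Gamma\Rightarrow\Delta$ and $\alpha_2,\Gamma\Rightarrow\Delta$ infer $\alpha_1\vee\alpha_2,\Gamma\Rightarrow\Delta$; $(R\rightarrow)$ from $\alpha_1,\Gamma\Rightarrow\Delta,\alpha_2$ infer $\Gamma\Rightarrow\Delta,\alpha_1\rightarrow\alpha_2$; $(L\rightarrow)$ from $\Gamma\Rightarrow\Delta,\alpha_1$ and $\alpha_2,\Gamma\Rightarrow\Delta$ infer $\alpha_1\rightarrow\alpha_2,\Gamma\Rightarrow\Delta$; $(R\neg)$ from $\alpha,\Gamma\Rightarrow\Delta$ infer $\Gamma\Rightarrow\Delta,\neg\alpha$; $(L\neg)$ from $\Gamma\Rightarrow\Delta,\alpha$ infer $\neg\alpha,\Gamma\Rightarrow\Delta$; $(D_K)$: from $\alpha_1,\dots,\alpha_n\Rightarrow\beta$ ($n\ge0$) infer $\Sigma,D_{G_1}\alpha_1,\dots,D_{G_n}\alpha_n\Rightarrow D_G\beta,\Omega$ where all $G_i\subseteq G$, $\Sigma$ consists only of propositional variables, $\bot$, and $D_H\gamma$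 with $H\not\subseteq G$, and $\Omega$ only of propositional variables, $\bot$, outmost-boxed formulas. $\mathsf{G}(\mathbf{KD}_D)$ adds $(D_D)$: from $\Gamma\Rightarrow$ with $\Gamma\neq\emptyset$ infer $\Sigma,D_{\{a\}}\Gamma\Rightarrow\Omega$ ($D_{\{a\}}\Gamma=\{D_{\{a\}}\gamma:\gamma\in\Gamma\}$), $\Sigma$ only propositional variables, $\bot$, $D_H\gamma$ with $H\neq\{a\}$; $\Omega$ only propositional variables, $\bot$, outmost-boxed formulas. $\mathsf{G}(\mathbf{KT}_D)$ adds to $\mathsf{G}(\mathbf{K}_D)$ $(D_T)$: from $D_G\alpha,\alpha,\Gamma\Rightarrow\Delta$ infer $D_G\alpha,\Gamma\Rightarrow\Delta$. *)

theory Defs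
  imports "HOL-Library.Multiset" "HOL-Library.Countable"
begin

typedef 'a grp = "{G :: 'a set. G \<noteq> {}}" by auto

definition single_grp :: "'a \<Rightarrow> 'a grp" where
  "single_grp a = Abs_grp {a}"

datatype ('a, 'p) fm =
    Atom 'p
  | Bot
  | And "('a, 'p) fm" "('a, 'p) fm"
  | Or "('a, 'p) fm" "('a, 'p) fm"
  | Imp "('a, 'p) fm" "('a, 'p) fm"
  | Neg "('a, 'p) fm"
  | Box "'a grp" "('a, 'p) fm"

datatype logic = K_D | KD_D | KT_D

fun tv :: "(('a, 'p) fm \<Rightarrow> bool) \<Rightarrow> ('a, 'p) fm \<Rightarrow> bool" where
  "tv v (Atom p) = v (Atom p)"
| "tv v Bot = False"
| "tv v (And a b) = (tv v a \<and> tv v b)"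
| "tv v (Or a b) = (tv v a \<or> tv v b)"
| "tv v (Imp a b) = (tv v a \<longrightarrow> tv v b)"
| "tv v (Neg a) = (\<not> tv v a)"
| "tv v (Box G a) = v (Box G a)"

definition taut :: "('a, 'p) fm \<Rightarrow> bool" where
  "taut A = (\<forall>v. tv v A)"

inductive hil :: "logic \<Rightarrow> ('a, 'p) fm \<Rightarrow> bool" where
  H_taut: "taut A \<Longrightarrow> hil L A"
| H_K: "hil L (Imp (Box G (Imp a b)) (Imp (Box G a) (Box G b)))"
| H_mono: "Rep_grp G \<subseteq> Rep_grp H \<Longrightarrow> hil L (Imp (Box G a) (Box H a))"
| H_MP: "hil L (Imp a b) \<Longrightarrow> hil L a \<Longrightarrow> hil L b"
| H_Nec: "hil L a \<Longrightarrow> hil L (Box G a)"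
| H_D: "L = KD_D \<Longrightarrow> hil L (Neg (Box (single_grp ag) Bot))"
| H_T: "L = KT_D \<Longrightarrow> hil L (Imp (Box G a) a)"

fun omega_ok :: "('a, 'p) fm \<Rightarrow> bool" where
  "omega_ok (Atom p) = True"
| "omega_ok Bot = True"
| "omega_ok (Box H g) = True"
| "omega_ok _ = False"

fun sigmaK_ok :: "'a grp \<Rightarrow> ('a, 'p) fm \<Rightarrow> bool" where
  "sigmaK_ok G (Atom p) = True"
| "sigmaK_ok G Bot = True"
| "sigmaK_ok G (Box H g) = (\<not> Rep_grp H \<subseteq> Rep_grp G)"
| "sigmaK_ok G _ = False"

fun sigmaD_ok :: "'a \<Rightarrow> ('a, 'p) fm \<Rightarrow> bool" where
  "sigmaD_ok ag (Atom p) = True"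
| "sigmaD_ok ag Bot = True"
| "sigmaD_ok ag (Box H g) = (Rep_grp H \<noteq> {ag})"
| "sigmaD_ok ag _ = False"

inductive gc :: "logic \<Rightarrow> ('a, 'p) fm multiset \<Rightarrow> ('a, 'p) fm multiset \<Rightarrow> bool" where
  Ax: "gc L (add_mset (Atom p) \<Gamma>) (add_mset (Atom p) \<Delta>)"
| BotL: "gc L (add_mset Bot \<Gamma>) \<Delta>"
| AndR: "gc L \<Gamma> (add_mset a1 \<Delta>) \<Longrightarrow> gc L \<Gamma> (add_mset a2 \<Delta>) \<Longrightarrow> gc L \<Gamma> (add_mset (And a1 a2) \<Delta>)"
| AndL: "gc L (add_mset a1 (add_mset a2 \<Gamma>)) \<Delta> \<Longrightarrow> gc L (add_mset (And a1 a2) \<Gamma>) \<Delta>"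
| OrR: "gc L \<Gamma> (add_mset a1 (add_mset a2 \<Delta>)) \<Longrightarrow> gc L \<Gamma> (add_mset (Or a1 a2) \<Delta>)"
| OrL: "gc L (add_mset a1 \<Gamma>) \<Delta> \<Longrightarrow> gc L (add_mset a2 \<Gamma>) \<Delta> \<Longrightarrow> gc L (add_mset (Or a1 a2) \<Gamma>) \<Delta>"
| ImpR: "gc L (add_mset a1 \<Gamma>) (add_mset a2 \<Delta>) \<Longrightarrow> gc L \<Gamma> (add_mset (Imp a1 a2) \<Delta>)"
| ImpL: "gc L \<Gamma> (add_mset a1 \<Delta>) \<Longrightarrow> gc L (add_mset a2 \<Gamma>) \<Delta> \<Longrightarrow> gc L (add_mset (Imp a1 a2) \<Gamma>) \<Delta>"
| NegR: "gc L (add_mset a \<Gamma>) \<Delta> \<Longrightarrow> gc L \<Gamma> (add_mset (Neg a) \<Delta>)"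
| NegL: "gc L \<Gamma> (add_mset a \<Delta>) \<Longrightarrow> gc L (add_mset (Neg a) \<Gamma>) \<Delta>"
| DK: "gc L (mset (map snd gas)) {#b#} \<Longrightarrow>
       (\<forall>ga \<in> set gas. Rep_grp (fst ga) \<subseteq> Rep_grp G) \<Longrightarrow>
       (\<forall>x \<in># \<Sigma>. sigmaK_ok G x) \<Longrightarrow> (\<forall>x \<in># \<Omega>. omega_ok x) \<Longrightarrow>
       gc L (\<Sigma> + mset (map (\<lambda>ga. Box (fst ga) (snd ga)) gas)) (add_mset (Box G b) \<Omega>)"
| DD: "L = KD_D \<Longrightarrow> \<Gamma> \<noteq> {#} \<Longrightarrow> gc L \<Gamma> {#} \<Longrightarrow>
       (\<forall>x \<in># \<Sigma>. sigmaD_ok ag x) \<Longrightarrow> (\<forall>x \<in># \<Omega>. omega_ok x) \<Longrightarrow>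
       gc L (\<Sigma> + image_mset (Box (single_grp ag)) \<Gamma>) \<Omega>"
| DT: "L = KT_D \<Longrightarrow> gc L (add_mset (Box G a) (add_mset a \<Gamma>)) \<Delta> \<Longrightarrow>
       gc L (add_mset (Box G a) \<Gamma>) \<Delta>"

end

theory Submission imports Defs begin

definition cj :: "('a,'p) fm list \<Rightarrow> ('a,'p) fm" where "cj xs = foldr And xs (Neg Bot)"
definition dj :: "('a,'p) fm list \<Rightarrow> ('a,'p) fm" where "dj xs = foldr Or xs Bot"
definition lsts :: "'b multiset \<Rightarrow> 'b list" where "lsts M = (SOME xs. mset xs = M)"
definition seqf :: "('a,'p) fm multiset \<Rightarrow> ('a,'p) fm multiset \<Rightarrow> ('a,'p) fm" where
  "seqf G D = Imp (cj (lsts G)) (dj (lsts D))"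

lemma mset_lsts[simp]: "mset (lsts M) = M"
  unfolding lsts_def by (rule someI_ex[OF ex_mset])
lemma set_lsts[simp]: "set (lsts M) = set_mset M"
  by (metis mset_lsts set_mset_mset)

lemma tv_cj[simp]: "tv v (cj xs) = (\<forall>x\<in>set xs. tv v x)"
  unfolding cj_def by (induction xs) auto
lemma tv_dj[simp]: "tv v (dj xs) = (\<exists>x\<in>set xs. tv v x)"
  unfolding dj_def by (induction xs) auto
lemma tv_seqf: "tv v (seqf G D) = ((\<forall>x\<in>#G. tv v x) \<longrightarrow> (\<exists>x\<in>#D. tv v x))"
  unfolding seqf_def by simp


lemma hil_tc: "(\<forall>A\<in>set As. hil L A) \<Longrightarrow> (\<forall>v. (\<forall>A\<in>set As. tv v A) \<longrightarrow> tv v B) \<Longrightarrow> hil L B"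
proof (induction As arbitrary: B)
  case Nil
  then have "taut B" unfolding taut_def by simp
  then show ?case by (rule H_taut)
next
  case (Cons a As)
  have "\<forall>A\<in>set As. hil L A" using Cons.prems(1) by simp
  moreover have "\<forall>v. (\<forall>A\<in>set As. tv v A) \<longrightarrow> tv v (Imp a B)" using Cons.prems(2) by simp
  ultimately have "hil L (Imp a B)" by (rule Cons.IH)
  moreover have "hil L a" using Cons.prems(1) by simp
  ultimately show ?case by (rule H_MP)
qed


lemma hil_tc1: "hil L A \<Longrightarrow> (\<And>v. tv v A \<Longrightarrow> tv v B) \<Longrightarrow> hil L B"
  by (rule hil_tc[of "[A]"]) auto
lemma hil_tc2: "hil L A \<Longrightarrow> hil L A' \<Longrightarrow> (\<And>v. tv v A \<Longrightarrow> tv v A' \<Longrightarrow> tv v B) \<Longrightarrow> hil L B"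
  by (rule hil_tc[of "[A,A']"]) auto

lemma hil_box: "hil L (Imp (cj as) b) \<Longrightarrow> hil L (Imp (cj (map (Box G) as)) (Box G b))"
proof (induction as arbitrary: b)
  case Nil
  then have "hil L b" by (rule hil_tc1) (simp add: cj_def)
  then have "hil L (Box G b)" by (rule H_Nec)
  then show ?case by (rule hil_tc1) simp
next
  case (Cons a as)
  have "hil L (Imp (cj as) (Imp a b))" using Cons.prems by (rule hil_tc1) (simp add: cj_def)
  then have 1: "hil L (Imp (cj (map (Box G) as)) (Box G (Imp a b)))" by (rule Cons.IH)
  have 2: "hil L (Imp (Box G (Imp a b)) (Imp (Box G a) (Box G b)))" by (rule H_K)
  from 1 2 show ?case by (rule hil_tc2) (auto simp: cj_def)
qed

lemma gc_sound: "gc L G D \<Longrightarrow> hil L (seqf G D)"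
proof (induction rule: gc.induct)
  case (Ax L p \<Gamma> \<Delta>)
  show ?case by (rule hil_tc[of "[]"]) (auto simp: tv_seqf)
next
  case (BotL L \<Gamma> \<Delta>)
  show ?case by (rule hil_tc[of "[]"]) (auto simp: tv_seqf)
next
  case (AndR L \<Gamma> a1 \<Delta> a2)
  from AndR.IH show ?case by (rule hil_tc2) (auto simp: tv_seqf)
next
  case (AndL L a1 a2 \<Gamma> \<Delta>)
  from AndL.IH show ?case by (rule hil_tc1) (auto simp: tv_seqf)
next
  case (OrR L \<Gamma> a1 a2 \<Delta>)
  from OrR.IH show ?case by (rule hil_tc1) (auto simp: tv_seqf)
next
  case (OrL L a1 \<Gamma> \<Delta> a2)
  from OrL.IH show ?case by (rule hil_tc2) (auto simp: tv_seqf)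
next
  case (ImpR L a1 \<Gamma> a2 \<Delta>)
  from ImpR.IH show ?case by (rule hil_tc1) (auto simp: tv_seqf)
next
  case (ImpL L \<Gamma> a1 \<Delta> a2)
  from ImpL.IH show ?case by (rule hil_tc2) (auto simp: tv_seqf)
next
  case (NegR L a \<Gamma> \<Delta>)
  from NegR.IH show ?case by (rule hil_tc1) (auto simp: tv_seqf)
next
  case (NegL L \<Gamma> a \<Delta>)
  from NegL.IH show ?case by (rule hil_tc1) (auto simp: tv_seqf)
next
  case (DK L gas b G \<Sigma> \<Omega>)
  let ?as = "lsts (mset (map snd gas))"
  have "hil L (Imp (cj ?as) b)" using DK.IH by (rule hil_tc1) (auto simp: tv_seqf)
  then have 1: "hil L (Imp (cj (map (Box G) ?as)) (Box G b))" by (rule hil_box)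
  let ?ms = "map (\<lambda>ga. Imp (Box (fst ga) (snd ga)) (Box G (snd ga))) gas"
  have 2: "\<forall>A\<in>set ?ms. hil L A" using DK.hyps(2) by (auto intro: H_mono)
  show ?case
  proof (rule hil_tc[of "Imp (cj (map (Box G) ?as)) (Box G b) # ?ms"])
    show "\<forall>A\<in>set (Imp (cj (map (Box G) ?as)) (Box G b) # ?ms). hil L A" using 1 2 by simp
    show "\<forall>v. (\<forall>A\<in>set (Imp (cj (map (Box G) ?as)) (Box G b) # ?ms). tv v A) \<longrightarrow>
         tv v (seqf (\<Sigma> + mset (map (\<lambda>ga. Box (fst ga) (snd ga)) gas)) (add_mset (Box G b) \<Omega>))"
    proof (intro allI impI)
      fix v assume h: "\<forall>A\<in>set (Imp (cj (map (Box G) ?as)) (Box G b) # ?ms). tv v A"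
      show "tv v (seqf (\<Sigma> + mset (map (\<lambda>ga. Box (fst ga) (snd ga)) gas)) (add_mset (Box G b) \<Omega>))"
        unfolding tv_seqf
      proof
        assume a: "\<forall>x\<in>#\<Sigma> + mset (map (\<lambda>ga. Box (fst ga) (snd ga)) gas). tv v x"
        have "\<forall>x\<in>set ?as. tv v (Box G x)"
        proof
          fix x assume "x \<in> set ?as"
          then obtain ga where ga: "ga \<in> set gas" "x = snd ga" by auto
          then have m: "Box (fst ga) (snd ga) \<in># \<Sigma> + mset (map (\<lambda>ga. Box (fst ga) (snd ga)) gas)" by auto
          then have "tv v (Box (fst ga) (snd ga))" using a by blast
          moreover have "tv v (Imp (Box (fst ga) (snd ga)) (Box G (snd ga)))" using h ga by auto
          ultimately show "tv v (Box G x)" using ga by simp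
        qed
        then have "tv v (Box G b)" using h by simp
        then show "\<exists>x\<in>#add_mset (Box G b) \<Omega>. tv v x" by auto
      qed
    qed
  qed
next
  case (DD L \<Gamma> \<Sigma> ag \<Omega>)
  let ?as = "lsts \<Gamma>"
  have "hil L (Imp (cj ?as) Bot)" using DD.IH by (rule hil_tc1) (auto simp: tv_seqf)
  then have 1: "hil L (Imp (cj (map (Box (single_grp ag)) ?as)) (Box (single_grp ag) Bot))" by (rule hil_box)
  have 2: "hil L (Neg (Box (single_grp ag) Bot))" using DD.hyps(1) by (rule H_D)
  from 1 2 show ?case
  proof (rule hil_tc2)
    fix v assume h1: "tv v (Imp (cj (map (Box (single_grp ag)) ?as)) (Box (single_grp ag) Bot))"
      and h2: "tv v (Neg (Box (single_grp ag) Bot))"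
    show "tv v (seqf (\<Sigma> + image_mset (Box (single_grp ag)) \<Gamma>) \<Omega>)" unfolding tv_seqf
    proof
      assume a: "\<forall>x\<in>#\<Sigma> + image_mset (Box (single_grp ag)) \<Gamma>. tv v x"
      have "\<forall>x\<in>set ?as. tv v (Box (single_grp ag) x)"
      proof
        fix x assume "x \<in> set ?as"
        then have "Box (single_grp ag) x \<in># \<Sigma> + image_mset (Box (single_grp ag)) \<Gamma>" by auto
        then show "tv v (Box (single_grp ag) x)" using a by blast
      qed
      then show "\<exists>x\<in>#\<Omega>. tv v x" using h1 h2 by simp
    qed
  qed
next
  case (DT L G a \<Gamma> \<Delta>)
  have 2: "hil L (Imp (Box G a) a)" using DT.hyps(1) by (rule H_T)
  from DT.IH 2 show ?case by (rule hil_tc2) (auto simp: tv_seqf)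
qed

lemma gc_to_hil: "gc L {#} {#A#} \<Longrightarrow> hil L A"
  by (drule gc_sound, erule hil_tc1) (auto simp: tv_seqf)


datatype ('a,'p) tr = Nd (tval: "'p set") (tlp: bool) (tkids: "('a grp \<times> ('a,'p) tr) list")

primrec sat :: "('a,'p) fm \<Rightarrow> ('a,'p) tr \<Rightarrow> bool" where
  "sat (Atom p) t = (p \<in> tval t)"
| "sat Bot t = False"
| "sat (And a b) t = (sat a t \<and> sat b t)"
| "sat (Or a b) t = (sat a t \<or> sat b t)"
| "sat (Imp a b) t = (sat a t \<longrightarrow> sat b t)"
| "sat (Neg a) t = (\<not> sat a t)"
| "sat (Box H a) t = ((tlp t \<longrightarrow> sat a t) \<and> (\<forall>k\<in>set (tkids t). Rep_grp H \<subseteq> Rep_grp (fst k) \<longrightarrow> sat a (snd k)))"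

inductive inK :: "logic \<Rightarrow> ('a,'p) tr \<Rightarrow> bool" where
  inKI: "(\<forall>k\<in>set cs. inK L (snd k)) \<Longrightarrow> (L = KD_D \<longrightarrow> lp \<or> (\<forall>a. \<exists>k\<in>set cs. a \<in> Rep_grp (fst k))) \<Longrightarrow>
   (L = KT_D \<longrightarrow> lp) \<Longrightarrow> inK L (Nd v lp cs)"

lemma Rep_single[simp]: "Rep_grp (single_grp a) = {a}"
  by (simp add: single_grp_def Abs_grp_inverse)

lemma tv_sat: "tv (\<lambda>f. sat f t) A = sat A t" by (induction A) auto

lemma inK_kid: "inK L t \<Longrightarrow> k \<in> set (tkids t) \<Longrightarrow> inK L (snd k)"
  by (cases rule: inK.cases) auto

lemma hil_sound: "hil L A \<Longrightarrow> inK L t \<Longrightarrow> sat A t"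
proof (induction arbitrary: t rule: hil.induct)
  case (H_taut A L)
  then show ?case using tv_sat[of t A] by (simp add: taut_def)
next
  case (H_K L G a b)
  then show ?case by auto
next
  case (H_mono G H L a)
  then show ?case by auto
next
  case (H_MP L a b)
  then show ?case by auto
next
  case (H_Nec L a G)
  then show ?case by auto (metis inK_kid snd_conv)
next
  case (H_D L ag)
  from H_D.prems show ?case
  proof (cases rule: inK.cases)
    case (inKI cs lp v)
    then show ?thesis using H_D.hyps by auto
  qed
next
  case (H_T L G a)
  from H_T.prems show ?case
  proof (cases rule: inK.cases)
    case (inKI cs lp v)
    then show ?thesis using H_T.hyps by auto
  qed
qed


section \<open>Completeness\<close>

primrec sub :: "('a,'p) fm \<Rightarrow> ('a,'p) fm set" where
  "sub (Atom p) = {Atom p}"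
| "sub Bot = {Bot}"
| "sub (And a b) = insert (And a b) (sub a \<union> sub b)"
| "sub (Or a b) = insert (Or a b) (sub a \<union> sub b)"
| "sub (Imp a b) = insert (Imp a b) (sub a \<union> sub b)"
| "sub (Neg a) = insert (Neg a) (sub a)"
| "sub (Box H a) = insert (Box H a) (sub a)"

definition subs :: "('a,'p) fm set \<Rightarrow> ('a,'p) fm set" where "subs S = \<Union> (sub ` S)"

lemma finite_sub[simp]: "finite (sub x)" by (induction x) auto
lemma sub_self[simp]: "x \<in> sub x" by (cases x) auto
lemma sub_trans: "y \<in> sub x \<Longrightarrow> sub y \<subseteq> sub x" by (induction x) auto
lemma sub_size: "y \<in> sub x \<Longrightarrow> size y \<le> size x" by (induction x) auto
lemma finite_subs: "finite S \<Longrightarrow> finite (subs S)" unfolding subs_def by auto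
lemma subs_Un: "subs (A \<union> B) = subs A \<union> subs B" unfolding subs_def by auto
lemma in_subs: "x \<in> S \<Longrightarrow> sub x \<subseteq> subs S" unfolding subs_def by auto

lemma in_rm_neq: "y \<noteq> x \<Longrightarrow> y \<in># M \<Longrightarrow> y \<in># M - {#x#}"
  by (metis diff_single_trivial insert_DiffM insert_noteq_member)

fun okL :: "('a,'p) fm set \<Rightarrow> ('a,'p) fm set \<Rightarrow> ('a,'p) fm \<Rightarrow> bool" where
  "okL HL HR (And a b) = (a \<in> HL \<and> b \<in> HL)"
| "okL HL HR (Or a b) = (a \<in> HL \<or> b \<in> HL)"
| "okL HL HR (Imp a b) = (a \<in> HR \<or> b \<in> HL)"
| "okL HL HR (Neg a) = (a \<in> HR)"
| "okL HL HR _ = False"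

fun okR :: "('a,'p) fm set \<Rightarrow> ('a,'p) fm set \<Rightarrow> ('a,'p) fm \<Rightarrow> bool" where
  "okR HL HR (And a b) = (a \<in> HR \<or> b \<in> HR)"
| "okR HL HR (Or a b) = (a \<in> HR \<and> b \<in> HR)"
| "okR HL HR (Imp a b) = (a \<in> HL \<and> b \<in> HR)"
| "okR HL HR (Neg a) = (a \<in> HL)"
| "okR HL HR _ = False"

lemma okL_mono: "okL HL HR x \<Longrightarrow> HL \<subseteq> HL' \<Longrightarrow> HR \<subseteq> HR' \<Longrightarrow> okL HL' HR' x"
  by (cases x) auto
lemma okR_mono: "okR HL HR x \<Longrightarrow> HL \<subseteq> HL' \<Longrightarrow> HR \<subseteq> HR' \<Longrightarrow> okR HL' HR' x"
  by (cases x) auto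

definition hinv :: "('a,'p) fm set \<Rightarrow> ('a,'p) fm set \<Rightarrow> ('a,'p) fm multiset \<Rightarrow> ('a,'p) fm multiset \<Rightarrow> bool" where
  "hinv HL HR G D = (set_mset G \<subseteq> HL \<and> set_mset D \<subseteq> HR \<and> (\<forall>x\<in>HL. x \<in># G \<or> okL HL HR x)
     \<and> (\<forall>x\<in>HR. x \<in># D \<or> okR HL HR x))"

lemma invL:
  assumes inv: "hinv HL HR G D" and x: "x \<in># G" and ok: "okL (HL \<union> set_mset NL) (HR \<union> set_mset NR) x"
  shows "hinv (HL \<union> set_mset NL) (HR \<union> set_mset NR) (NL + (G - {#x#})) (NR + D)"
proof -
  have i1: "set_mset G \<subseteq> HL" and i2: "set_mset D \<subseteq> HR" and i3: "\<forall>y\<in>HL. y \<in># G \<or> okL HL HR y"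
    and i4: "\<forall>y\<in>HR. y \<in># D \<or> okR HL HR y" using inv unfolding hinv_def by blast+
  have a: "set_mset (NL + (G - {#x#})) \<subseteq> HL \<union> set_mset NL" using i1 by (auto dest: in_diffD)
  have b: "set_mset (NR + D) \<subseteq> HR \<union> set_mset NR" using i2 by auto
  have c: "y \<in># NL + (G - {#x#}) \<or> okL (HL \<union> set_mset NL) (HR \<union> set_mset NR) y"
    if y: "y \<in> HL \<union> set_mset NL" for y
  proof (cases "y \<in># NL")
    case True then show ?thesis by simp
  next
    case False
    then have yH: "y \<in> HL" using y by simp
    show ?thesis
    proof (cases "y = x")
      case True then show ?thesis using ok by simp
    next
      case ne: False
      from yH i3 have "y \<in># G \<or> okL HL HR y" by blast
      moreover have "okL HL HR y \<Longrightarrow> okL (HL \<union> set_mset NL) (HR \<union> set_mset NR) y"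
        by (erule okL_mono) auto
      moreover have "y \<in># G \<Longrightarrow> y \<in># NL + (G - {#x#})" using ne in_rm_neq by (simp add: in_rm_neq)
      ultimately show ?thesis by blast
    qed
  qed
  have d: "y \<in># NR + D \<or> okR (HL \<union> set_mset NL) (HR \<union> set_mset NR) y"
    if y: "y \<in> HR \<union> set_mset NR" for y
  proof (cases "y \<in># NR")
    case True then show ?thesis by simp
  next
    case False
    then have yH: "y \<in> HR" using y by simp
    from yH i4 have "y \<in># D \<or> okR HL HR y" by blast
    moreover have "okR HL HR y \<Longrightarrow> okR (HL \<union> set_mset NL) (HR \<union> set_mset NR) y"
      by (erule okR_mono) auto
    ultimately show ?thesis by auto
  qed
  show ?thesis unfolding hinv_def using a b c d by blast
qed

lemma invR:
  assumes inv: "hinv HL HR G D" and x: "x \<in># D" and ok: "okR (HL \<union> set_mset NL) (HR \<union> set_mset NR) x"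
  shows "hinv (HL \<union> set_mset NL) (HR \<union> set_mset NR) (NL + G) (NR + (D - {#x#}))"
proof -
  have i1: "set_mset G \<subseteq> HL" and i2: "set_mset D \<subseteq> HR" and i3: "\<forall>y\<in>HL. y \<in># G \<or> okL HL HR y"
    and i4: "\<forall>y\<in>HR. y \<in># D \<or> okR HL HR y" using inv unfolding hinv_def by blast+
  have a: "set_mset (NR + (D - {#x#})) \<subseteq> HR \<union> set_mset NR" using i2 by (auto dest: in_diffD)
  have b: "set_mset (NL + G) \<subseteq> HL \<union> set_mset NL" using i1 by auto
  have c: "y \<in># NR + (D - {#x#}) \<or> okR (HL \<union> set_mset NL) (HR \<union> set_mset NR) y"
    if y: "y \<in> HR \<union> set_mset NR" for y
  proof (cases "y \<in># NR")
    case True then show ?thesis by simp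
  next
    case False
    then have yH: "y \<in> HR" using y by simp
    show ?thesis
    proof (cases "y = x")
      case True then show ?thesis using ok by simp
    next
      case ne: False
      from yH i4 have "y \<in># D \<or> okR HL HR y" by blast
      moreover have "okR HL HR y \<Longrightarrow> okR (HL \<union> set_mset NL) (HR \<union> set_mset NR) y"
        by (erule okR_mono) auto
      moreover have "y \<in># D \<Longrightarrow> y \<in># NR + (D - {#x#})" using ne in_rm_neq by (simp add: in_rm_neq)
      ultimately show ?thesis by blast
    qed
  qed
  have d: "y \<in># NL + G \<or> okL (HL \<union> set_mset NL) (HR \<union> set_mset NR) y"
    if y: "y \<in> HL \<union> set_mset NL" for y
  proof (cases "y \<in># NL")
    case True then show ?thesis by simp
  next
    case False
    then have yH: "y \<in> HL" using y by simp
    from yH i3 have "y \<in># G \<or> okL HL HR y" by blast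
    moreover have "okL HL HR y \<Longrightarrow> okL (HL \<union> set_mset NL) (HR \<union> set_mset NR) y"
      by (erule okL_mono) auto
    ultimately show ?thesis by auto
  qed
  show ?thesis unfolding hinv_def using a b c d by blast
qed

definition size_ms :: "('a,'p) fm multiset \<Rightarrow> nat" where "size_ms M = sum_mset (image_mset size M)"
lemma size_ms_simps[simp]: "size_ms {#} = 0" "size_ms (add_mset x M) = size x + size_ms M"
  "size_ms (M + N) = size_ms M + size_ms N"
  by (auto simp: size_ms_def)
lemma size_ms_remove: "x \<in># M \<Longrightarrow> size_ms M = size x + size_ms (M - {#x#})"
  by (metis insert_DiffM size_ms_simps(2))

fun mu1 :: "('a,'p) fm multiset \<times> ('a,'p) fm multiset \<times> ('a,'p) fm set \<times> ('a,'p) fm set \<Rightarrow> nat" where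
  "mu1 (G,D,HL,HR) = card (subs (HL \<union> HR))"
fun mu2 :: "('a,'p) fm multiset \<times> ('a,'p) fm multiset \<times> ('a,'p) fm set \<times> ('a,'p) fm set \<Rightarrow> nat" where
  "mu2 (G,D,HL,HR) = card (subs (HL \<union> HR) - HL)"
fun mu3 :: "('a,'p) fm multiset \<times> ('a,'p) fm multiset \<times> ('a,'p) fm set \<times> ('a,'p) fm set \<Rightarrow> nat" where
  "mu3 (G,D,HL,HR) = size_ms G + size_ms D"

abbreviation "MU \<equiv> measures [mu1, mu2, mu3]"

lemma subs_same:
  assumes "x \<in> HL \<union> HR" "set_mset NL \<union> set_mset NR \<subseteq> sub x"
  shows "subs (HL \<union> set_mset NL \<union> (HR \<union> set_mset NR)) = subs (HL \<union> HR)"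
proof -
  have "sub x \<subseteq> subs (HL \<union> HR)" using assms(1) by (rule in_subs)
  moreover have "subs (set_mset NL \<union> set_mset NR) \<subseteq> sub x"
    unfolding subs_def
  proof (rule UN_least)
    fix y assume "y \<in> set_mset NL \<union> set_mset NR"
    then show "sub y \<subseteq> sub x" using assms(2) sub_trans by blast
  qed
  ultimately have "subs (set_mset NL \<union> set_mset NR) \<subseteq> subs (HL \<union> HR)" by (rule order_trans[rotated])
  then show ?thesis unfolding subs_Un by auto
qed

lemma dec_gen:
  assumes fin: "finite HL" "finite HR" and x: "x \<in> HL \<union> HR"
    and sb: "set_mset NL \<union> set_mset NR \<subseteq> sub x" and sz: "size_ms G' + size_ms D' < size_ms G + size_ms D"
  shows "((G', D', HL \<union> set_mset NL, HR \<union> set_mset NR), (G,D,HL,HR)) \<in> MU"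
proof -
  have eq: "subs (HL \<union> set_mset NL \<union> (HR \<union> set_mset NR)) = subs (HL \<union> HR)" by (rule subs_same[OF x sb])
  have f: "finite (subs (HL \<union> HR))" using fin by (simp add: finite_subs)
  have "card (subs (HL \<union> HR) - (HL \<union> set_mset NL)) \<le> card (subs (HL \<union> HR) - HL)"
    by (rule card_mono) (use f in auto)
  then show ?thesis using eq sz
    by (intro measures_lesseq measures_less) simp_all
qed

lemma decL:
  assumes fin: "finite HL" "finite HR" and x: "x \<in># G" "x \<in> HL"
    and sb: "set_mset NL \<union> set_mset NR \<subseteq> sub x" and sz: "size_ms NL + size_ms NR < size x"
  shows "((NL + (G - {#x#}), NR + D, HL \<union> set_mset NL, HR \<union> set_mset NR), (G,D,HL,HR)) \<in> MU"
proof (rule dec_gen[OF fin _ sb])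
  show "x \<in> HL \<union> HR" using x by simp
  show "size_ms (NL + (G - {#x#})) + size_ms (NR + D) < size_ms G + size_ms D"
    unfolding size_ms_simps(3) using sz size_ms_remove[OF x(1)] by linarith
qed

lemma decR:
  assumes fin: "finite HL" "finite HR" and x: "x \<in># D" "x \<in> HR"
    and sb: "set_mset NL \<union> set_mset NR \<subseteq> sub x" and sz: "size_ms NL + size_ms NR < size x"
  shows "((NL + G, NR + (D - {#x#}), HL \<union> set_mset NL, HR \<union> set_mset NR), (G,D,HL,HR)) \<in> MU"
proof (rule dec_gen[OF fin _ sb])
  show "x \<in> HL \<union> HR" using x by simp
  show "size_ms (NL + G) + size_ms (NR + (D - {#x#})) < size_ms G + size_ms D"
    unfolding size_ms_simps(3) using sz size_ms_remove[OF x(1)] by linarith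
qed

definition CMp :: "logic \<Rightarrow> ('a,'p) fm set \<Rightarrow> ('a,'p) fm set \<Rightarrow> bool" where
  "CMp L HL HR = (\<exists>r. inK L r \<and> (\<forall>x\<in>HL. sat x r) \<and> (\<forall>x\<in>HR. \<not> sat x r))"

lemma CMp_mono: "CMp L HL' HR' \<Longrightarrow> HL \<subseteq> HL' \<Longrightarrow> HR \<subseteq> HR' \<Longrightarrow> CMp L HL HR"
  unfolding CMp_def by blast

fun Pst :: "logic \<Rightarrow> ('a,'p) fm multiset \<times> ('a,'p) fm multiset \<times> ('a,'p) fm set \<times> ('a,'p) fm set \<Rightarrow> bool" where
  "Pst L (G,D,HL,HR) = (finite HL \<longrightarrow> finite HR \<longrightarrow> hinv HL HR G D \<longrightarrow> gc L G D \<or> CMp L HL HR)"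

lemma stepL1:
  assumes IH: "\<And>st'. (st', (G,D,HL,HR)) \<in> MU \<Longrightarrow> Pst L st'"
  and fin: "finite HL" "finite HR" and inv: "hinv HL HR G D" and x: "x \<in># G"
  and ok: "okL (HL \<union> set_mset NL) (HR \<union> set_mset NR) x"
  and sb: "set_mset NL \<union> set_mset NR \<subseteq> sub x" and sz: "size_ms NL + size_ms NR < size x"
  and rl: "gc L (NL + (G - {#x#})) (NR + D) \<Longrightarrow> gc L G D"
  shows "gc L G D \<or> CMp L HL HR"
proof -
  have xH: "x \<in> HL" using inv x unfolding hinv_def by auto
  have "Pst L (NL + (G - {#x#}), NR + D, HL \<union> set_mset NL, HR \<union> set_mset NR)"
    by (rule IH, rule decL[OF fin x xH sb sz])
  moreover have "hinv (HL \<union> set_mset NL) (HR \<union> set_mset NR) (NL + (G - {#x#})) (NR + D)"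
    by (rule invL[OF inv x ok])
  ultimately have "gc L (NL + (G - {#x#})) (NR + D) \<or> CMp L (HL \<union> set_mset NL) (HR \<union> set_mset NR)"
    using fin by simp
  then show ?thesis using rl CMp_mono by (meson Un_upper1)
qed

lemma stepL2:
  assumes IH: "\<And>st'. (st', (G,D,HL,HR)) \<in> MU \<Longrightarrow> Pst L st'"
  and fin: "finite HL" "finite HR" and inv: "hinv HL HR G D" and x: "x \<in># G"
  and ok1: "okL (HL \<union> set_mset NL1) (HR \<union> set_mset NR1) x"
  and sb1: "set_mset NL1 \<union> set_mset NR1 \<subseteq> sub x" and sz1: "size_ms NL1 + size_ms NR1 < size x"
  and ok2: "okL (HL \<union> set_mset NL2) (HR \<union> set_mset NR2) x"
  and sb2: "set_mset NL2 \<union> set_mset NR2 \<subseteq> sub x" and sz2: "size_ms NL2 + size_ms NR2 < size x"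
  and rl: "gc L (NL1 + (G - {#x#})) (NR1 + D) \<Longrightarrow> gc L (NL2 + (G - {#x#})) (NR2 + D) \<Longrightarrow> gc L G D"
  shows "gc L G D \<or> CMp L HL HR"
proof -
  have xH: "x \<in> HL" using inv x unfolding hinv_def by auto
  have "Pst L (NL1 + (G - {#x#}), NR1 + D, HL \<union> set_mset NL1, HR \<union> set_mset NR1)"
    by (rule IH, rule decL[OF fin x xH sb1 sz1])
  moreover have "hinv (HL \<union> set_mset NL1) (HR \<union> set_mset NR1) (NL1 + (G - {#x#})) (NR1 + D)"
    by (rule invL[OF inv x ok1])
  ultimately have 1: "gc L (NL1 + (G - {#x#})) (NR1 + D) \<or> CMp L (HL \<union> set_mset NL1) (HR \<union> set_mset NR1)"
    using fin by simp
  have "Pst L (NL2 + (G - {#x#}), NR2 + D, HL \<union> set_mset NL2, HR \<union> set_mset NR2)"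
    by (rule IH, rule decL[OF fin x xH sb2 sz2])
  moreover have "hinv (HL \<union> set_mset NL2) (HR \<union> set_mset NR2) (NL2 + (G - {#x#})) (NR2 + D)"
    by (rule invL[OF inv x ok2])
  ultimately have 2: "gc L (NL2 + (G - {#x#})) (NR2 + D) \<or> CMp L (HL \<union> set_mset NL2) (HR \<union> set_mset NR2)"
    using fin by simp
  show ?thesis using 1 2 rl CMp_mono by (meson Un_upper1)
qed

lemma stepR1:
  assumes IH: "\<And>st'. (st', (G,D,HL,HR)) \<in> MU \<Longrightarrow> Pst L st'"
  and fin: "finite HL" "finite HR" and inv: "hinv HL HR G D" and x: "x \<in># D"
  and ok: "okR (HL \<union> set_mset NL) (HR \<union> set_mset NR) x"
  and sb: "set_mset NL \<union> set_mset NR \<subseteq> sub x" and sz: "size_ms NL + size_ms NR < size x"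
  and rl: "gc L (NL + G) (NR + (D - {#x#})) \<Longrightarrow> gc L G D"
  shows "gc L G D \<or> CMp L HL HR"
proof -
  have xH: "x \<in> HR" using inv x unfolding hinv_def by auto
  have "Pst L (NL + G, NR + (D - {#x#}), HL \<union> set_mset NL, HR \<union> set_mset NR)"
    by (rule IH, rule decR[OF fin x xH sb sz])
  moreover have "hinv (HL \<union> set_mset NL) (HR \<union> set_mset NR) (NL + G) (NR + (D - {#x#}))"
    by (rule invR[OF inv x ok])
  ultimately have "gc L (NL + G) (NR + (D - {#x#})) \<or> CMp L (HL \<union> set_mset NL) (HR \<union> set_mset NR)"
    using fin by simp
  then show ?thesis using rl CMp_mono by (meson Un_upper1)
qed

lemma stepR2:
  assumes IH: "\<And>st'. (st', (G,D,HL,HR)) \<in> MU \<Longrightarrow> Pst L st'"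
  and fin: "finite HL" "finite HR" and inv: "hinv HL HR G D" and x: "x \<in># D"
  and ok1: "okR (HL \<union> set_mset NL1) (HR \<union> set_mset NR1) x"
  and sb1: "set_mset NL1 \<union> set_mset NR1 \<subseteq> sub x" and sz1: "size_ms NL1 + size_ms NR1 < size x"
  and ok2: "okR (HL \<union> set_mset NL2) (HR \<union> set_mset NR2) x"
  and sb2: "set_mset NL2 \<union> set_mset NR2 \<subseteq> sub x" and sz2: "size_ms NL2 + size_ms NR2 < size x"
  and rl: "gc L (NL1 + G) (NR1 + (D - {#x#})) \<Longrightarrow> gc L (NL2 + G) (NR2 + (D - {#x#})) \<Longrightarrow> gc L G D"
  shows "gc L G D \<or> CMp L HL HR"
proof -
  have xH: "x \<in> HR" using inv x unfolding hinv_def by auto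
  have "Pst L (NL1 + G, NR1 + (D - {#x#}), HL \<union> set_mset NL1, HR \<union> set_mset NR1)"
    by (rule IH, rule decR[OF fin x xH sb1 sz1])
  moreover have "hinv (HL \<union> set_mset NL1) (HR \<union> set_mset NR1) (NL1 + G) (NR1 + (D - {#x#}))"
    by (rule invR[OF inv x ok1])
  ultimately have 1: "gc L (NL1 + G) (NR1 + (D - {#x#})) \<or> CMp L (HL \<union> set_mset NL1) (HR \<union> set_mset NR1)"
    using fin by simp
  have "Pst L (NL2 + G, NR2 + (D - {#x#}), HL \<union> set_mset NL2, HR \<union> set_mset NR2)"
    by (rule IH, rule decR[OF fin x xH sb2 sz2])
  moreover have "hinv (HL \<union> set_mset NL2) (HR \<union> set_mset NR2) (NL2 + G) (NR2 + (D - {#x#}))"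
    by (rule invR[OF inv x ok2])
  ultimately have 2: "gc L (NL2 + G) (NR2 + (D - {#x#})) \<or> CMp L (HL \<union> set_mset NL2) (HR \<union> set_mset NR2)"
    using fin by simp
  show ?thesis using 1 2 rl CMp_mono by (meson Un_upper1)
qed


fun goodK :: "'a grp \<Rightarrow> ('a,'p) fm \<Rightarrow> bool" where
  "goodK G (Box H a) = (Rep_grp H \<subseteq> Rep_grp G)"
| "goodK G _ = False"
fun goodD :: "'a \<Rightarrow> ('a,'p) fm \<Rightarrow> bool" where
  "goodD ag (Box H a) = (H = single_grp ag)"
| "goodD ag _ = False"
fun unbox :: "('a,'p) fm \<Rightarrow> ('a,'p) fm" where
  "unbox (Box H a) = a"
| "unbox x = x"
fun gof :: "('a,'p) fm \<Rightarrow> 'a grp" where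
  "gof (Box H a) = H"
| "gof x = undefined"

definition AG :: "'a grp \<Rightarrow> ('a,'p) fm multiset \<Rightarrow> ('a,'p) fm multiset" where
  "AG G M = image_mset unbox (filter_mset (goodK G) M)"
definition GA :: "'a \<Rightarrow> ('a,'p) fm multiset \<Rightarrow> ('a,'p) fm multiset" where
  "GA ag M = image_mset unbox (filter_mset (goodD ag) M)"

lemma goodK_box: "goodK G x \<Longrightarrow> x = Box (gof x) (unbox x) \<and> Rep_grp (gof x) \<subseteq> Rep_grp G"
  by (cases x) auto
lemma goodD_box: "goodD ag x \<Longrightarrow> x = Box (single_grp ag) (unbox x)"
  by (cases x) auto

lemma DK_app:
  assumes om1: "\<forall>x\<in>#G. omega_ok x" and om2: "\<forall>x\<in>#D. omega_ok x"
    and b: "Box K b \<in># D" and g: "gc L (AG K G) {#b#}"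
  shows "gc L G D"
proof -
  obtain xs where xs: "mset xs = filter_mset (goodK K) G" using ex_mset by blast
  have xsg: "\<forall>x\<in>set xs. goodK K x"
  proof
    fix x assume "x \<in> set xs"
    then have "x \<in># filter_mset (goodK K) G" using xs by (metis set_mset_mset)
    then show "goodK K x" by simp
  qed
  define gas where "gas = map (\<lambda>x. (gof x, unbox x)) xs"
  have 1: "mset (map snd gas) = AG K G" unfolding gas_def AG_def xs[symmetric] by (simp add: o_def)
  have 2: "\<forall>ga\<in>set gas. Rep_grp (fst ga) \<subseteq> Rep_grp K" unfolding gas_def
  proof
    fix ga assume "ga \<in> set (map (\<lambda>x. (gof x, unbox x)) xs)"
    then obtain x where x: "x \<in> set xs" "ga = (gof x, unbox x)" by auto
    then have "goodK K x" using xsg by blast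
    then show "Rep_grp (fst ga) \<subseteq> Rep_grp K" using goodK_box[of K x] x(2) by simp
  qed
  have 3: "map (\<lambda>ga. Box (fst ga) (snd ga)) gas = xs" unfolding gas_def map_map o_def
  proof (rule map_idI)
    fix x assume "x \<in> set xs"
    then have "goodK K x" using xsg by blast
    then have e: "Box (gof x) (unbox x) = x" using goodK_box[of K x] by simp
    show "Box (fst (gof x, unbox x)) (snd (gof x, unbox x)) = x" using e by simp
  qed
  define Sg where "Sg = filter_mset (\<lambda>x. \<not> goodK K x) G"
  have 4: "\<forall>x\<in>#Sg. sigmaK_ok K x"
  proof
    fix x assume "x \<in># Sg"
    then have "omega_ok x" "\<not> goodK K x" using om1 unfolding Sg_def by auto
    then show "sigmaK_ok K x" by (cases x) auto
  qed
  define Om where "Om = D - {#Box K b#}"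
  have 5: "\<forall>x\<in>#Om. omega_ok x" using om2 unfolding Om_def by (auto dest: in_diffD)
  have "gc L (Sg + mset (map (\<lambda>ga. Box (fst ga) (snd ga)) gas)) (add_mset (Box K b) Om)"
    using g 2 4 5 unfolding 1[symmetric] by (rule DK)
  moreover have "Sg + mset (map (\<lambda>ga. Box (fst ga) (snd ga)) gas) = G"
    unfolding 3 xs Sg_def by (metis multiset_partition union_commute)
  moreover have "add_mset (Box K b) Om = D" unfolding Om_def using b by simp
  ultimately show ?thesis by simp
qed

lemma Rep_single_eq: "Rep_grp H = {a} \<Longrightarrow> H = single_grp a"
  by (metis Rep_grp_inject Rep_single)

lemma DD_app:
  assumes L: "L = KD_D" and om1: "\<forall>x\<in>#G. omega_ok x" and om2: "\<forall>x\<in>#D. omega_ok x"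
    and ne: "GA a G \<noteq> {#}" and g: "gc L (GA a G) {#}"
  shows "gc L G D"
proof -
  define Sg where "Sg = filter_mset (\<lambda>x. \<not> goodD a x) G"
  have 4: "\<forall>x\<in>#Sg. sigmaD_ok a x"
  proof
    fix x assume "x \<in># Sg"
    then have "omega_ok x" "\<not> goodD a x" using om1 unfolding Sg_def by auto
    then show "sigmaD_ok a x" by (cases x) (auto dest: Rep_single_eq)
  qed
  have 6: "image_mset (Box (single_grp a)) (GA a G) = filter_mset (goodD a) G"
  proof -
    have "image_mset (Box (single_grp a)) (GA a G) = image_mset (\<lambda>x. Box (single_grp a) (unbox x)) (filter_mset (goodD a) G)"
      unfolding GA_def by (simp add: multiset.map_comp o_def)
    also have "\<dots> = image_mset id (filter_mset (goodD a) G)"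
      
    proof (rule image_mset_cong)
      fix x assume "x \<in># filter_mset (goodD a) G"
      then have "goodD a x" by simp
      from goodD_box[OF this] show "Box (single_grp a) (unbox x) = id x" by simp
    qed
    finally show ?thesis by simp
  qed
  have "gc L (Sg + image_mset (Box (single_grp a)) (GA a G)) D"
    using L ne g 4 om2 by (rule DD)
  moreover have "Sg + image_mset (Box (single_grp a)) (GA a G) = G"
    unfolding 6 Sg_def by (metis multiset_partition union_commute)
  ultimately show ?thesis by simp
qed

lemma mu1_less:
  assumes fS: "finite S" and fT: "finite T" and ne: "S \<noteq> {}"
    and T: "\<forall>g\<in>T. \<exists>K. Box K g \<in> S"
  shows "card (subs T) < card (subs S)"
proof -
  have fsS: "finite (subs S)" using fS by (rule finite_subs)
  have fsT: "finite (subs T)" using fT by (rule finite_subs)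
  have sub1: "subs T \<subseteq> subs S"
  proof
    fix y assume "y \<in> subs T"
    then obtain g where g: "g \<in> T" "y \<in> sub g" unfolding subs_def by auto
    then obtain K where K: "Box K g \<in> S" using T by blast
    have "y \<in> sub (Box K g)" using g by simp
    then show "y \<in> subs S" using in_subs[OF K] by blast
  qed
  show ?thesis
  proof (cases "T = {}")
    case True
    obtain s where "s \<in> S" using ne by blast
    then have "s \<in> subs S" using in_subs[of s S] by auto
    then have "card (subs S) > 0" using fsS card_gt_0_iff by blast
    then show ?thesis using True by (simp add: subs_def)
  next
    case False
    then have nT: "subs T \<noteq> {}" unfolding subs_def using sub_self by blast
    define m where "m = Max (size ` subs T)"
    have "m \<in> size ` subs T" unfolding m_def using fsT nT by simp
    then obtain x where x: "x \<in> subs T" "size x = m" by auto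
    have mx: "\<And>z. z \<in> subs T \<Longrightarrow> size z \<le> m" unfolding m_def using fsT by simp
    obtain g where g: "g \<in> T" "x \<in> sub g" using x(1) unfolding subs_def by auto
    obtain K where K: "Box K g \<in> S" using T g(1) by blast
    have "Box K g \<notin> subs T"
    proof
      assume "Box K g \<in> subs T"
      then have "size (Box K g) \<le> m" by (rule mx)
      moreover have "size x \<le> size g" using g(2) by (rule sub_size)
      ultimately show False using x(2) by simp
    qed
    moreover have "Box K g \<in> subs S" using in_subs[OF K] by auto
    ultimately have "subs T \<subset> subs S" using sub1 by blast
    then show ?thesis by (rule psubset_card_mono[OF fsS])
  qed
qed

lemma premise_step:
  assumes IH: "\<And>st'. (st', (G,D,HL,HR)) \<in> MU \<Longrightarrow> Pst L st'"
  and fin: "finite HL" "finite HR" and ne: "HL \<union> HR \<noteq> {}"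
  and T: "\<forall>g\<in>set_mset A \<union> set_mset B. \<exists>K. Box K g \<in> HL \<union> HR"
  and ng: "\<not> gc L A B"
  shows "CMp L (set_mset A) (set_mset B)"
proof -
  have "card (subs (set_mset A \<union> set_mset B)) < card (subs (HL \<union> HR))"
    by (rule mu1_less) (use fin ne T in auto)
  then have "((A, B, set_mset A, set_mset B), (G,D,HL,HR)) \<in> MU" by (simp add: measures_less)
  then have "Pst L (A, B, set_mset A, set_mset B)" by (rule IH)
  moreover have "hinv (set_mset A) (set_mset B) A B" unfolding hinv_def by auto
  ultimately show ?thesis using ng by simp
qed

lemma DT_step:
  assumes IH: "\<And>st'. (st', (G,D,HL,HR)) \<in> MU \<Longrightarrow> Pst L st'"
  and fin: "finite HL" "finite HR" and inv: "hinv HL HR G D" and L: "L = KT_D"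
  and b: "Box K a \<in># G" and na: "a \<notin> HL"
  shows "gc L G D \<or> CMp L HL HR"
proof -
  have bH: "Box K a \<in> HL" using inv b unfolding hinv_def by auto
  have aS: "a \<in> subs (HL \<union> HR)" using in_subs[of "Box K a" "HL \<union> HR"] bH by auto
  have sa: "sub a \<subseteq> subs (HL \<union> HR)"
  proof -
    from aS obtain z where z: "z \<in> HL \<union> HR" "a \<in> sub z" unfolding subs_def by auto
    then show ?thesis using sub_trans in_subs by blast
  qed
  have "subs (insert a HL \<union> HR) = sub a \<union> subs (HL \<union> HR)" by (auto simp: subs_def)
  then have eq: "subs (insert a HL \<union> HR) = subs (HL \<union> HR)" using sa by blast
  have fS: "finite (subs (HL \<union> HR))" using fin by (simp add: finite_subs)
  have "subs (HL \<union> HR) - insert a HL \<subset> subs (HL \<union> HR) - HL" using aS na by auto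
  then have "card (subs (HL \<union> HR) - insert a HL) < card (subs (HL \<union> HR) - HL)"
    by (rule psubset_card_mono[rotated]) (use fS in simp)
  then have "((add_mset a G, D, insert a HL, HR), (G,D,HL,HR)) \<in> MU"
    using eq by (intro measures_lesseq measures_less) simp_all
  then have "Pst L (add_mset a G, D, insert a HL, HR)" by (rule IH)
  moreover have "hinv (insert a HL) HR (add_mset a G) D"
  proof -
    have "hinv (HL \<union> set_mset {#a#}) (HR \<union> set_mset {#}) ({#a#} + (G - {#Box K a#} + {#Box K a#})) ({#} + D)"
    proof -
      have i1: "set_mset G \<subseteq> HL" and i2: "set_mset D \<subseteq> HR" and i3: "\<forall>y\<in>HL. y \<in># G \<or> okL HL HR y"
        and i4: "\<forall>y\<in>HR. y \<in># D \<or> okR HL HR y" using inv unfolding hinv_def by blast+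
      have "\<forall>y\<in>insert a HL. y \<in># add_mset a G \<or> okL (insert a HL) HR y"
        using i3 okL_mono[of HL HR _ "insert a HL" HR] by auto
      moreover have "\<forall>y\<in>HR. y \<in># D \<or> okR (insert a HL) HR y"
        using i4 okR_mono[of HL HR _ "insert a HL" HR] by auto
      ultimately show ?thesis using i1 i2 b unfolding hinv_def by auto
    qed
    then show ?thesis using b by simp
  qed
  ultimately have "gc L (add_mset a G) D \<or> CMp L (insert a HL) HR" using fin by simp
  moreover have "gc L (add_mset a G) D \<Longrightarrow> gc L G D"
  proof -
    assume "gc L (add_mset a G) D"
    then have "gc L (add_mset (Box K a) (add_mset a (G - {#Box K a#}))) D" using b
      by (metis add_mset_commute insert_DiffM)
    then have "gc L (add_mset (Box K a) (G - {#Box K a#})) D" using L by (rule DT[rotated])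
    then show ?thesis using b by simp
  qed
  ultimately show ?thesis using CMp_mono[of L "insert a HL" HR HL HR] by blast
qed


lemma Rep_ne: "Rep_grp H \<noteq> {}" using Rep_grp[of H] by auto

lemma modal:
  fixes G :: "('a::finite,'p) fm multiset"
  assumes IH: "\<And>st'. (st', (G,D,HL,HR)) \<in> MU \<Longrightarrow> Pst L st'"
  and fin: "finite HL" "finite HR" and inv: "hinv HL HR G D"
  and om1: "\<forall>x\<in>#G. omega_ok x" and om2: "\<forall>x\<in>#D. omega_ok x"
  and KT: "L = KT_D \<Longrightarrow> \<forall>H a. Box H a \<in># G \<longrightarrow> a \<in> HL"
  shows "gc L G D \<or> CMp L HL HR"
proof (cases "gc L G D")
  case True then show ?thesis by simp
next
  case ng: False
  have i1: "set_mset G \<subseteq> HL" and i2: "set_mset D \<subseteq> HR" and i3: "\<forall>y\<in>HL. y \<in># G \<or> okL HL HR y"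
    and i4: "\<forall>y\<in>HR. y \<in># D \<or> okR HL HR y" using inv unfolding hinv_def by blast+
  have nbot: "Bot \<notin># G"
  proof
    assume "Bot \<in># G"
    then have "gc L (add_mset Bot (G - {#Bot#})) D" by (intro BotL)
    then show False using ng \<open>Bot \<in># G\<close> by simp
  qed
  have nax: "Atom p \<notin># D" if "Atom p \<in># G" for p
  proof
    assume "Atom p \<in># D"
    have "gc L (add_mset (Atom p) (G - {#Atom p#})) (add_mset (Atom p) (D - {#Atom p#}))" by (rule Ax)
    then show False using ng \<open>Atom p \<in># D\<close> that by simp
  qed
  define DB where "DB = {(K,b). Box K b \<in># D}"
  have "DB \<subseteq> (\<lambda>x. (gof x, unbox x)) ` set_mset D"
  proof
    fix d assume "d \<in> DB"
    then obtain K b where d: "d = (K,b)" "Box K b \<in># D" unfolding DB_def by auto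
    then show "d \<in> (\<lambda>x. (gof x, unbox x)) ` set_mset D" by (auto intro!: image_eqI[where x="Box K b"])
  qed
  then have finDB: "finite DB" by (rule finite_subset) simp
  have cmD: "\<forall>d\<in>DB. \<exists>t. inK L t \<and> (\<forall>x\<in>#AG (fst d) G. sat x t) \<and> \<not> sat (snd d) t"
  proof
    fix d assume "d \<in> DB"
    then obtain K b where d: "d = (K,b)" and bD: "Box K b \<in># D" unfolding DB_def by auto
    have ngp: "\<not> gc L (AG K G) {#b#}" using DK_app[OF om1 om2 bD] ng by blast
    have T: "\<forall>g\<in>set_mset (AG K G) \<union> set_mset {#b#}. \<exists>K'. Box K' g \<in> HL \<union> HR"
    proof
      fix g assume "g \<in> set_mset (AG K G) \<union> set_mset {#b#}"
      then show "\<exists>K'. Box K' g \<in> HL \<union> HR"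
      proof
        assume "g \<in> set_mset (AG K G)"
        then obtain x where x: "x \<in># G" "goodK K x" "g = unbox x" unfolding AG_def by auto
        have "Box (gof x) (unbox x) = x" using goodK_box[OF x(2)] by simp
        then have "Box (gof x) g \<in> HL" using x i1 by auto
        then show ?thesis by blast
      next
        assume "g \<in> set_mset {#b#}"
        then show ?thesis using bD i2 by auto
      qed
    qed
    have ne: "HL \<union> HR \<noteq> {}" using bD i2 by auto
    have "CMp L (set_mset (AG K G)) (set_mset {#b#})" by (rule premise_step[OF IH fin ne T ngp])
    then show "\<exists>t. inK L t \<and> (\<forall>x\<in>#AG (fst d) G. sat x t) \<and> \<not> sat (snd d) t"
      unfolding CMp_def d by auto
  qed
  from bchoice[OF cmD] obtain f where f: "\<forall>d\<in>DB. inK L (f d) \<and> (\<forall>x\<in>#AG (fst d) G. sat x (f d)) \<and> \<not> sat (snd d) (f d)"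
    by blast
  define t0 where "t0 = (Nd {} True [] :: ('a,'p) tr)"
  have t0: "inK L t0" unfolding t0_def by (rule inKI) auto
  have cmA: "\<forall>a. \<exists>t. inK L t \<and> (L = KD_D \<longrightarrow> (\<forall>x\<in>#GA a G. sat x t))"
  proof
    fix a show "\<exists>t. inK L t \<and> (L = KD_D \<longrightarrow> (\<forall>x\<in>#GA a G. sat x t))"
    proof (cases "L = KD_D \<and> GA a G \<noteq> {#}")
      case False then show ?thesis using t0 by auto
    next
      case True
      have ngp: "\<not> gc L (GA a G) {#}" using DD_app[OF _ om1 om2, of L a] True ng by blast
      have T: "\<forall>g\<in>set_mset (GA a G) \<union> set_mset {#}. \<exists>K'. Box K' g \<in> HL \<union> HR"
      proof
        fix g assume "g \<in> set_mset (GA a G) \<union> set_mset {#}"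
        then obtain x where x: "x \<in># G" "goodD a x" "g = unbox x" unfolding GA_def by auto
        have "Box (single_grp a) (unbox x) = x" using goodD_box[OF x(2)] by simp
        then have "Box (single_grp a) g \<in> HL" using x i1 by auto
        then show "\<exists>K'. Box K' g \<in> HL \<union> HR" by blast
      qed
      have "G \<noteq> {#}" using True unfolding GA_def by auto
      then have ne: "HL \<union> HR \<noteq> {}" using i1 by auto
      have "CMp L (set_mset (GA a G)) (set_mset {#})" by (rule premise_step[OF IH fin ne T ngp])
      then show ?thesis unfolding CMp_def by auto
    qed
  qed
  from choice[OF cmA] obtain g where g: "\<forall>a. inK L (g a) \<and> (L = KD_D \<longrightarrow> (\<forall>x\<in>#GA a G. sat x (g a)))"
    by blast
  obtain ds where ds: "set ds = DB" using finite_list[OF finDB] by blast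
  obtain ags where ags: "set ags = (UNIV :: 'a set)" using finite_list[OF finite_UNIV] by blast
  define kids where "kids = map (\<lambda>d. (fst d, f d)) ds @ (if L = KD_D then map (\<lambda>a. (single_grp a, g a)) ags else [])"
  define r where "r = Nd {p. Atom p \<in># G} (L = KT_D) kids"
  have inr: "inK L r" unfolding r_def
  proof (rule inKI)
    show "\<forall>k\<in>set kids. inK L (snd k)" using f g ds unfolding kids_def by auto
    show "L = KD_D \<longrightarrow> (L = KT_D) \<or> (\<forall>a. \<exists>k\<in>set kids. a \<in> Rep_grp (fst k))"
    proof
      assume L: "L = KD_D"
      have "\<forall>a. \<exists>k\<in>set kids. a \<in> Rep_grp (fst k)"
      proof
        fix a
        have "(single_grp a, g a) \<in> set kids" using L ags unfolding kids_def by auto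
        then show "\<exists>k\<in>set kids. a \<in> Rep_grp (fst k)" by force
      qed
      then show "(L = KT_D) \<or> (\<forall>a. \<exists>k\<in>set kids. a \<in> Rep_grp (fst k))" by blast
    qed
    show "L = KT_D \<longrightarrow> L = KT_D" by simp
  qed
  have truth: "(x \<in> HL \<longrightarrow> sat x r) \<and> (x \<in> HR \<longrightarrow> \<not> sat x r)" for x
  proof (induction x)
    case (Atom p)
    have "Atom p \<in> HL \<Longrightarrow> Atom p \<in># G" using i3 by fastforce
    moreover have "Atom p \<in> HR \<Longrightarrow> Atom p \<in># D" using i4 by fastforce
    ultimately show ?case using nax unfolding r_def by auto
  next
    case Bot
    have "Bot \<in> HL \<Longrightarrow> Bot \<in># G" using i3 by fastforce
    then show ?case using nbot by auto
  next
    case (And a b)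
    have "And a b \<notin># G" "And a b \<notin># D" using om1 om2 by fastforce+
    then have "And a b \<in> HL \<Longrightarrow> okL HL HR (And a b)" "And a b \<in> HR \<Longrightarrow> okR HL HR (And a b)"
      using i3 i4 by blast+
    then show ?case using And.IH by auto
  next
    case (Or a b)
    have "Or a b \<notin># G" "Or a b \<notin># D" using om1 om2 by fastforce+
    then have "Or a b \<in> HL \<Longrightarrow> okL HL HR (Or a b)" "Or a b \<in> HR \<Longrightarrow> okR HL HR (Or a b)"
      using i3 i4 by blast+
    then show ?case using Or.IH by auto
  next
    case (Imp a b)
    have "Imp a b \<notin># G" "Imp a b \<notin># D" using om1 om2 by fastforce+
    then have "Imp a b \<in> HL \<Longrightarrow> okL HL HR (Imp a b)" "Imp a b \<in> HR \<Longrightarrow> okR HL HR (Imp a b)"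
      using i3 i4 by blast+
    then show ?case using Imp.IH by auto
  next
    case (Neg a)
    have "Neg a \<notin># G" "Neg a \<notin># D" using om1 om2 by fastforce+
    then have "Neg a \<in> HL \<Longrightarrow> okL HL HR (Neg a)" "Neg a \<in> HR \<Longrightarrow> okR HL HR (Neg a)"
      using i3 i4 by blast+
    then show ?case using Neg.IH by auto
  next
    case (Box H a)
    have L1: "sat (Box H a) r" if hl: "Box H a \<in> HL"
    proof -
      have bG: "Box H a \<in># G" using i3 hl by fastforce
      have p1: "tlp r \<longrightarrow> sat a r"
      proof
        assume "tlp r"
        then have "L = KT_D" unfolding r_def by simp
        then have "a \<in> HL" using KT bG by blast
        then show "sat a r" using Box.IH by blast
      qed
      have p2: "\<forall>k\<in>set (tkids r). Rep_grp H \<subseteq> Rep_grp (fst k) \<longrightarrow> sat a (snd k)"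
      proof (intro ballI impI)
        fix k assume k: "k \<in> set (tkids r)" and sb: "Rep_grp H \<subseteq> Rep_grp (fst k)"
        have "k \<in> set (map (\<lambda>d. (fst d, f d)) ds) \<or> (L = KD_D \<and> k \<in> set (map (\<lambda>a. (single_grp a, g a)) ags))"
          using k unfolding r_def kids_def by (auto split: if_splits)
        then show "sat a (snd k)"
        proof
          assume "k \<in> set (map (\<lambda>d. (fst d, f d)) ds)"
          then obtain d where d: "d \<in> DB" "k = (fst d, f d)" using ds by auto
          have "goodK (fst d) (Box H a)" using sb d(2) by simp
          then have "a \<in># AG (fst d) G" unfolding AG_def using bG
            by (metis (mono_tags, lifting) image_eqI mem_Collect_eq set_image_mset set_mset_filter unbox.simps(1))
          then show ?thesis using f d by auto
        next
          assume "L = KD_D \<and> k \<in> set (map (\<lambda>a. (single_grp a, g a)) ags)"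
          then obtain c where L: "L = KD_D" and c: "k = (single_grp c, g c)" by auto
          have "Rep_grp H \<subseteq> {c}" using sb c by simp
          then have "Rep_grp H = {c}" using Rep_ne[of H] by blast
          then have "H = single_grp c" by (rule Rep_single_eq)
          then have "goodD c (Box H a)" by simp
          then have "a \<in># GA c G" unfolding GA_def using bG
            by (metis (mono_tags, lifting) image_eqI mem_Collect_eq set_image_mset set_mset_filter unbox.simps(1))
          then show ?thesis using g L c by auto
        qed
      qed
      show ?thesis using p1 p2 by simp
    qed
    have L2: "\<not> sat (Box H a) r" if hr: "Box H a \<in> HR"
    proof -
      have bD: "Box H a \<in># D" using i4 hr by fastforce
      then have d: "(H,a) \<in> DB" unfolding DB_def by simp
      then have "(H, f (H,a)) \<in> set (tkids r)" using ds unfolding r_def kids_def by force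
      moreover have "\<not> sat a (f (H,a))" using f d by auto
      ultimately show ?thesis by force
    qed
    show ?case using L1 L2 by blast
  qed
  have "CMp L HL HR" unfolding CMp_def using inr truth by blast
  then show ?thesis by simp
qed


lemma Pst_all: "Pst L (st :: ('a::finite,'p) fm multiset \<times> ('a,'p) fm multiset \<times> ('a,'p) fm set \<times> ('a,'p) fm set)"
proof (induction st rule: wf_induct[OF wf_measures[of "[mu1,mu2,mu3]"]])
  case (1 st)
  obtain G D HL HR where st: "st = (G,D,HL,HR)" using prod_cases4 by blast
  have IH: "\<And>st'. (st', (G,D,HL,HR)) \<in> MU \<Longrightarrow> Pst L st'" using 1 st by blast
  show ?case unfolding st Pst.simps
  proof (intro impI)
    assume fin1: "finite HL" and fin2: "finite HR" and inv: "hinv HL HR G D"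
    show "gc L G D \<or> CMp L HL HR"
    proof (cases "\<exists>x\<in>#G. \<not> omega_ok x")
      case True
      then obtain x where x: "x \<in># G" "\<not> omega_ok x" by blast
      show ?thesis
      proof (cases x)
        case (And a b)
        with x have xin: "And a b \<in># G" by simp
        show ?thesis
        proof (rule stepL1[OF IH fin1 fin2 inv xin, of "{#a, b#}" "{#}"])
          show "okL (HL \<union> set_mset {#a, b#}) (HR \<union> set_mset {#}) (And a b)" by simp
          show "set_mset {#a, b#} \<union> set_mset {#} \<subseteq> sub (And a b)" by auto
          show "size_ms {#a, b#} + size_ms {#} < size (And a b)" by simp
          assume "gc L ({#a, b#} + (G - {#And a b#})) ({#} + D)"
          then have "gc L (add_mset a (add_mset b (G - {#And a b#}))) D" by simp
          then have "gc L (add_mset (And a b) (G - {#And a b#})) D" by (rule AndL)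
          then show "gc L G D" using xin by simp
        qed
      next
        case (Or a b)
        with x have xin: "Or a b \<in># G" by simp
        show ?thesis
        proof (rule stepL2[OF IH fin1 fin2 inv xin, of "{#a#}" "{#}" "{#b#}" "{#}"])
          show "okL (HL \<union> set_mset {#a#}) (HR \<union> set_mset {#}) (Or a b)" by simp
          show "set_mset {#a#} \<union> set_mset {#} \<subseteq> sub (Or a b)" by auto
          show "size_ms {#a#} + size_ms {#} < size (Or a b)" by simp
          show "okL (HL \<union> set_mset {#b#}) (HR \<union> set_mset {#}) (Or a b)" by simp
          show "set_mset {#b#} \<union> set_mset {#} \<subseteq> sub (Or a b)" by auto
          show "size_ms {#b#} + size_ms {#} < size (Or a b)" by simp
          assume "gc L ({#a#} + (G - {#Or a b#})) ({#} + D)" "gc L ({#b#} + (G - {#Or a b#})) ({#} + D)"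
          then have "gc L (add_mset a (G - {#Or a b#})) D" "gc L (add_mset b (G - {#Or a b#})) D" by simp_all
          then have "gc L (add_mset (Or a b) (G - {#Or a b#})) D" by (rule OrL)
          then show "gc L G D" using xin by simp
        qed
      next
        case (Imp a b)
        with x have xin: "Imp a b \<in># G" by simp
        show ?thesis
        proof (rule stepL2[OF IH fin1 fin2 inv xin, of "{#}" "{#a#}" "{#b#}" "{#}"])
          show "okL (HL \<union> set_mset {#}) (HR \<union> set_mset {#a#}) (Imp a b)" by simp
          show "set_mset {#} \<union> set_mset {#a#} \<subseteq> sub (Imp a b)" by auto
          show "size_ms {#} + size_ms {#a#} < size (Imp a b)" by simp
          show "okL (HL \<union> set_mset {#b#}) (HR \<union> set_mset {#}) (Imp a b)" by simp
          show "set_mset {#b#} \<union> set_mset {#} \<subseteq> sub (Imp a b)" by auto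
          show "size_ms {#b#} + size_ms {#} < size (Imp a b)" by simp
          assume "gc L ({#} + (G - {#Imp a b#})) ({#a#} + D)" "gc L ({#b#} + (G - {#Imp a b#})) ({#} + D)"
          then have "gc L (G - {#Imp a b#}) (add_mset a D)" "gc L (add_mset b (G - {#Imp a b#})) D" by simp_all
          then have "gc L (add_mset (Imp a b) (G - {#Imp a b#})) D" by (rule ImpL)
          then show "gc L G D" using xin by simp
        qed
      next
        case (Neg a)
        with x have xin: "Neg a \<in># G" by simp
        show ?thesis
        proof (rule stepL1[OF IH fin1 fin2 inv xin, of "{#}" "{#a#}"])
          show "okL (HL \<union> set_mset {#}) (HR \<union> set_mset {#a#}) (Neg a)" by simp
          show "set_mset {#} \<union> set_mset {#a#} \<subseteq> sub (Neg a)" by auto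
          show "size_ms {#} + size_ms {#a#} < size (Neg a)" by simp
          assume "gc L ({#} + (G - {#Neg a#})) ({#a#} + D)"
          then have "gc L (G - {#Neg a#}) (add_mset a D)" by simp
          then have "gc L (add_mset (Neg a) (G - {#Neg a#})) D" by (rule NegL)
          then show "gc L G D" using xin by simp
        qed
      qed (use x in auto)
    next
      case om1': False
      then have om1: "\<forall>x\<in>#G. omega_ok x" by blast
      show ?thesis
      proof (cases "\<exists>x\<in>#D. \<not> omega_ok x")
        case True
        then obtain x where x: "x \<in># D" "\<not> omega_ok x" by blast
        show ?thesis
        proof (cases x)
          case (And a b)
          with x have xin: "And a b \<in># D" by simp
          show ?thesis
          proof (rule stepR2[OF IH fin1 fin2 inv xin, of "{#}" "{#a#}" "{#}" "{#b#}"])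
            show "okR (HL \<union> set_mset {#}) (HR \<union> set_mset {#a#}) (And a b)" by simp
            show "set_mset {#} \<union> set_mset {#a#} \<subseteq> sub (And a b)" by auto
            show "size_ms {#} + size_ms {#a#} < size (And a b)" by simp
            show "okR (HL \<union> set_mset {#}) (HR \<union> set_mset {#b#}) (And a b)" by simp
            show "set_mset {#} \<union> set_mset {#b#} \<subseteq> sub (And a b)" by auto
            show "size_ms {#} + size_ms {#b#} < size (And a b)" by simp
            assume "gc L ({#} + G) ({#a#} + (D - {#And a b#}))" "gc L ({#} + G) ({#b#} + (D - {#And a b#}))"
            then have "gc L G (add_mset a (D - {#And a b#}))" "gc L G (add_mset b (D - {#And a b#}))" by simp_all
            then have "gc L G (add_mset (And a b) (D - {#And a b#}))" by (rule AndR)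
            then show "gc L G D" using xin by simp
          qed
        next
          case (Or a b)
          with x have xin: "Or a b \<in># D" by simp
          show ?thesis
          proof (rule stepR1[OF IH fin1 fin2 inv xin, of "{#}" "{#a, b#}"])
            show "okR (HL \<union> set_mset {#}) (HR \<union> set_mset {#a, b#}) (Or a b)" by simp
            show "set_mset {#} \<union> set_mset {#a, b#} \<subseteq> sub (Or a b)" by auto
            show "size_ms {#} + size_ms {#a, b#} < size (Or a b)" by simp
            assume "gc L ({#} + G) ({#a, b#} + (D - {#Or a b#}))"
            then have "gc L G (add_mset a (add_mset b (D - {#Or a b#})))" by simp
            then have "gc L G (add_mset (Or a b) (D - {#Or a b#}))" by (rule OrR)
            then show "gc L G D" using xin by simp
          qed
        next
          case (Imp a b)
          with x have xin: "Imp a b \<in># D" by simp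
          show ?thesis
          proof (rule stepR1[OF IH fin1 fin2 inv xin, of "{#a#}" "{#b#}"])
            show "okR (HL \<union> set_mset {#a#}) (HR \<union> set_mset {#b#}) (Imp a b)" by simp
            show "set_mset {#a#} \<union> set_mset {#b#} \<subseteq> sub (Imp a b)" by auto
            show "size_ms {#a#} + size_ms {#b#} < size (Imp a b)" by simp
            assume "gc L ({#a#} + G) ({#b#} + (D - {#Imp a b#}))"
            then have "gc L (add_mset a G) (add_mset b (D - {#Imp a b#}))" by simp
            then have "gc L G (add_mset (Imp a b) (D - {#Imp a b#}))" by (rule ImpR)
            then show "gc L G D" using xin by simp
          qed
        next
          case (Neg a)
          with x have xin: "Neg a \<in># D" by simp
          show ?thesis
          proof (rule stepR1[OF IH fin1 fin2 inv xin, of "{#a#}" "{#}"])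
            show "okR (HL \<union> set_mset {#a#}) (HR \<union> set_mset {#}) (Neg a)" by simp
            show "set_mset {#a#} \<union> set_mset {#} \<subseteq> sub (Neg a)" by auto
            show "size_ms {#a#} + size_ms {#} < size (Neg a)" by simp
            assume "gc L ({#a#} + G) ({#} + (D - {#Neg a#}))"
            then have "gc L (add_mset a G) (D - {#Neg a#})" by simp
            then have "gc L G (add_mset (Neg a) (D - {#Neg a#}))" by (rule NegR)
            then show "gc L G D" using xin by simp
          qed
        qed (use x in auto)
      next
        case False
        then have om2: "\<forall>x\<in>#D. omega_ok x" by blast
        show ?thesis
        proof (cases "L = KT_D \<and> (\<exists>H a. Box H a \<in># G \<and> a \<notin> HL)")
          case True
          then obtain H a where L: "L = KT_D" and b: "Box H a \<in># G" and na: "a \<notin> HL" by blast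
          show ?thesis by (rule DT_step[OF IH fin1 fin2 inv L b na])
        next
          case False
          then have KT: "L = KT_D \<Longrightarrow> \<forall>H a. Box H a \<in># G \<longrightarrow> a \<in> HL" by blast
          show ?thesis by (rule modal[OF IH fin1 fin2 inv om1 om2 KT])
        qed
      qed
    qed
  qed
qed

theorem theorem3p14:
  fixes L :: logic and A :: "('a :: finite, 'p :: countable) fm"
  shows "hil L A \<longleftrightarrow> gc L {#} {#A#}"
proof
  assume h: "hil L A"
  have "Pst L ({#}, {#A#}, {}, {A})" by (rule Pst_all)
  moreover have "hinv {} {A} {#} {#A#}" unfolding hinv_def by simp
  ultimately have "gc L {#} {#A#} \<or> CMp L {} {A}" by simp
  moreover have "\<not> CMp L {} {A}" using hil_sound[OF h] unfolding CMp_def by auto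
  ultimately show "gc L {#} {#A#}" by blast
next
  assume "gc L {#} {#A#}"
  then show "hil L A" by (rule gc_to_hil)
qed

end
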